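(* Let $\mathcal B$ be a positive MDABP. For each closed execution $\Upsilon$ in $\mathcal B$ that produces the set of ground atoms $W$, there exists a greedy execution $\Upsilon'$ in $\mathcal B$ that also produces $W$.
   Context: An MDABP is a pair $\mathcal{B}=\langle\mathcal{P},\mathcal{C}\rangle$ with process model $\mathcal{P}=\langle N,L\rangle$: $N=\langle P,T\rangle$ a finite directed multigraph (places $P$ with distinguished place $\mathit{start}$; transitions $T$), and $L$ assigns to each transition $t$ an execution condition $E_t$ (a Boolean conjunctive query over the database schema plus a distinguished relation $\mathit{In}$) and a writing rule $W_t: R(\bar u)\leftarrow B_t(\bar u)$ (head relation in the database schema, body a conjunctive query over the schema plus $\mathit{In}$); in general conditions and bodies may contain negated atoms and comparisons of a variable with a timestamp constant. A configuration $\mathcal C=\langle\mathcal I,\mathcal D,\tau\rangle$ has a database $\mathcal D$, current time $\tau\in\mathbb Q^+$, and instance part $\mathcal I$: a finite set of process instances, each with an input record $\mathit{In}(\bar c,\tau_o)$ and a current place. Atomic steps: traversal (an instance $o$ at $q$ with record $\mathit{In}(\bar c,\tau')$ traverses a transition $t$ from $q$ to $p$ if $E_t$ holds in $\mathcal D\cup\{\mathit{In}(\bar c,\tau')\}$; the database becomes $\mathcal D\cup\{R(\bar c'')\mid \bar c''\in B_t(\mathcal D\cup\{\mathit{In}(\bar c,\tau')\})\}$ and $o$ moves to $p$) and start (a new instance with some record $\mathit{In}(\bar c',\tau')$, $\tau'\ge\tau$, is placed at $\mathit{start}$ and the time becomes $\tau'$). An execution is a finite sequence of configurations starting from $\mathcal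 C$ obtained by atomic steps; it is closed if it has no start steps; it produces a set of facts $W$ if $W$ is contained in the database of its last configuration. $\mathcal B$ is positive if no execution condition or writing rule contains negated atoms. A safe step is a traversal step of an instance after which, given the current state of the database, the instance can return (by further traversals) to the place it occupied before the step; a critical step is a traversal step that is not safe. A greedy sequence is a sequence of safe steps that produces the largest number of new facts possible. A greedy execution is a closed execution in which greedy sequences and critical steps alternate. *)

theory Defs
  imports Main "HOL.Rat"
begin

datatype 'c val = Data 'c | TS rat

datatype 'r rname = Rel 'r | InRel

datatype ('x, 'c) trm = Var 'x | Cst "'c val"

datatype cmp = CLt | CLe | CEq | CNe | CGe | CGt

datatype ('r, 'x, 'c) lit =
    Pos "'r rname" "('x, 'c) trm list"
  | Neg "'r rname" "('x, 'c) trm list"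
  | Cmp 'x cmp rat

type_synonym ('r, 'x, 'c) query = "('r, 'x, 'c) lit list"

type_synonym ('r, 'c) fact = "'r \<times> 'c val list"

fun eval_trm :: "('x \<Rightarrow> 'c val) \<Rightarrow> ('x, 'c) trm \<Rightarrow> 'c val" where
  "eval_trm \<nu> (Var x) = \<nu> x"
| "eval_trm \<nu> (Cst c) = c"

fun cmp_sem :: "cmp \<Rightarrow> rat \<Rightarrow> rat \<Rightarrow> bool" where
  "cmp_sem CLt a b = (a < b)"
| "cmp_sem CLe a b = (a \<le> b)"
| "cmp_sem CEq a b = (a = b)"
| "cmp_sem CNe a b = (a \<noteq> b)"
| "cmp_sem CGe a b = (a \<ge> b)"
| "cmp_sem CGt a b = (a > b)"

fun sat_lit :: "('r rname \<times> 'c val list) set \<Rightarrow> ('x \<Rightarrow> 'c val) \<Rightarrow> ('r, 'x, 'c) lit \<Rightarrow> bool" where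
  "sat_lit I \<nu> (Pos R ts) = ((R, map (eval_trm \<nu>) ts) \<in> I)"
| "sat_lit I \<nu> (Neg R ts) = ((R, map (eval_trm \<nu>) ts) \<notin> I)"
| "sat_lit I \<nu> (Cmp x op k) = (\<exists>\<tau>. \<nu> x = TS \<tau> \<and> cmp_sem op \<tau> k)"

definition holds :: "('r rname \<times> 'c val list) set \<Rightarrow> ('r, 'x, 'c) query \<Rightarrow> bool" where
  "holds I q \<longleftrightarrow> (\<exists>\<nu>. \<forall>l\<in>set q. sat_lit I \<nu> l)"

definition answers :: "('r rname \<times> 'c val list) set \<Rightarrow> ('r, 'x, 'c) query \<Rightarrow> 'x list \<Rightarrow> 'c val list set" where
  "answers I q us = {map \<nu> us | \<nu>. \<forall>l\<in>set q. sat_lit I \<nu> l}"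

definition ext_db :: "('r, 'c) fact set \<Rightarrow> 'c val list \<times> rat \<Rightarrow> ('r rname \<times> 'c val list) set" where
  "ext_db D r = (\<lambda>(R, u). (Rel R, u)) ` D \<union> {(InRel, fst r @ [TS (snd r)])}"

fun trm_vars :: "('x, 'c) trm \<Rightarrow> 'x set" where
  "trm_vars (Var x) = {x}"
| "trm_vars (Cst c) = {}"

fun pos_vars_lit :: "('r, 'x, 'c) lit \<Rightarrow> 'x set" where
  "pos_vars_lit (Pos R ts) = \<Union> (trm_vars ` set ts)"
| "pos_vars_lit _ = {}"

fun vars_lit :: "('r, 'x, 'c) lit \<Rightarrow> 'x set" where
  "vars_lit (Pos R ts) = \<Union> (trm_vars ` set ts)"
| "vars_lit (Neg R ts) = \<Union> (trm_vars ` set ts)"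
| "vars_lit (Cmp x op k) = {x}"

definition range_restricted :: "('r, 'x, 'c) query \<Rightarrow> 'x set \<Rightarrow> bool" where
  "range_restricted q H \<longleftrightarrow>
     (\<Union>l\<in>set q. vars_lit l) \<union> H \<subseteq> (\<Union>l\<in>set q. pos_vars_lit l)"

fun is_neg :: "('r, 'x, 'c) lit \<Rightarrow> bool" where
  "is_neg (Neg R ts) = True"
| "is_neg _ = False"

text \<open>Process model P = <N, L>: finite directed multigraph with places and transitions
  (each transition has a source and a target place) and a labelling L giving, for each
  transition t, the execution condition E_t and writing rule W_t : R(u) <- B_t(u).\<close>
record ('p, 't, 'r, 'x, 'c) proc_model =
  places :: "'p set"
  trans :: "'t set"
  start :: 'p
  src :: "'t \<Rightarrow> 'p"
  tgt :: "'t \<Rightarrow> 'p"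
  cond :: "'t \<Rightarrow> ('r, 'x, 'c) query"
  wrel :: "'t \<Rightarrow> 'r"
  whead :: "'t \<Rightarrow> 'x list"
  wbody :: "'t \<Rightarrow> ('r, 'x, 'c) query"

text \<open>Configuration <I, D, tau>. Process instances are identified by natural numbers;
  each one carries its input record (c, tau_o) and its current place.\<close>
record ('p, 'r, 'c) config =
  inst :: "nat \<rightharpoonup> ('c val list \<times> rat) \<times> 'p"
  db :: "('r, 'c) fact set"
  time :: rat

record ('p, 't, 'r, 'x, 'c) mdabp =
  model :: "('p, 't, 'r, 'x, 'c) proc_model"
  conf :: "('p, 'r, 'c) config"

definition wf_model :: "('p, 't, 'r, 'x, 'c) proc_model \<Rightarrow> bool" where
  "wf_model P \<longleftrightarrow> finite (places P) \<and> finite (trans P) \<and> start P \<in> places P \<and>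
     (\<forall>t\<in>trans P. src P t \<in> places P \<and> tgt P t \<in> places P \<and>
        range_restricted (cond P t) {} \<and> range_restricted (wbody P t) (set (whead P t)))"

definition wf_config :: "('p, 't, 'r, 'x, 'c) proc_model \<Rightarrow> ('p, 'r, 'c) config \<Rightarrow> bool" where
  "wf_config P C \<longleftrightarrow> finite (db C) \<and> finite (dom (inst C)) \<and> 0 \<le> time C \<and>
     (\<forall>i r q. inst C i = Some (r, q) \<longrightarrow> q \<in> places P \<and> 0 \<le> snd r)"

definition wf_mdabp :: "('p, 't, 'r, 'x, 'c) mdabp \<Rightarrow> bool" where
  "wf_mdabp B \<longleftrightarrow> wf_model (model B) \<and> wf_config (model B) (conf B)"

definition positive :: "('p, 't, 'r, 'x, 'c) mdabp \<Rightarrow> bool" where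
  "positive B \<longleftrightarrow> (\<forall>t\<in>trans (model B).
      (\<forall>l\<in>set (cond (model B) t). \<not> is_neg l) \<and> (\<forall>l\<in>set (wbody (model B) t). \<not> is_neg l))"

definition trav :: "('p, 't, 'r, 'x, 'c) proc_model \<Rightarrow> ('p, 'r, 'c) config \<Rightarrow> nat \<Rightarrow> 't
                      \<Rightarrow> ('p, 'r, 'c) config \<Rightarrow> bool" where
  "trav P C i t C' \<longleftrightarrow> t \<in> trans P \<and>
     (\<exists>r. inst C i = Some (r, src P t) \<and>
          holds (ext_db (db C) r) (cond P t) \<and>
          C' = C\<lparr> inst := (inst C)(i \<mapsto> (r, tgt P t)),
                  db := db C \<union> {(wrel P t, u) | u. u \<in> answers (ext_db (db C) r) (wbody P t) (whead P t)} \<rparr>)"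

text \<open>Start step: a new instance with record In(c', tau'), tau' >= tau, is placed at start.
  (Not needed for closed executions; included for completeness.)\<close>
definition start_step :: "('p, 't, 'r, 'x, 'c) proc_model \<Rightarrow> ('p, 'r, 'c) config
                      \<Rightarrow> ('p, 'r, 'c) config \<Rightarrow> bool" where
  "start_step P C C' \<longleftrightarrow> (\<exists>i cs \<tau>'. i \<notin> dom (inst C) \<and> time C \<le> \<tau>' \<and>
     C' = C\<lparr> inst := (inst C)(i \<mapsto> ((cs, \<tau>'), start P)), time := \<tau>' \<rparr>)"

text \<open>A closed execution from C is a sequence of traversal steps, labelled by
  (instance, transition); it reaches configuration C'.\<close>
fun trav_path :: "('p, 't, 'r, 'x, 'c) proc_model \<Rightarrow> ('p, 'r, 'c) config \<Rightarrow> (nat \<times> 't) list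
                    \<Rightarrow> ('p, 'r, 'c) config \<Rightarrow> bool" where
  "trav_path P C [] C' = (C' = C)"
| "trav_path P C ((i, t) # s) C' = (\<exists>C1. trav P C i t C1 \<and> trav_path P C1 s C')"

definition safe_step :: "('p, 't, 'r, 'x, 'c) proc_model \<Rightarrow> ('p, 'r, 'c) config \<Rightarrow> nat \<Rightarrow> 't \<Rightarrow> bool" where
  "safe_step P C i t \<longleftrightarrow> (\<exists>C1. trav P C i t C1 \<and>
      (\<exists>ts C2. trav_path P C1 (map (\<lambda>t'. (i, t')) ts) C2 \<and>
               map_option snd (inst C2 i) = map_option snd (inst C i)))"

definition critical_step :: "('p, 't, 'r, 'x, 'c) proc_model \<Rightarrow> ('p, 'r, 'c) config \<Rightarrow> nat \<Rightarrow> 't \<Rightarrow> bool" where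
  "critical_step P C i t \<longleftrightarrow> (\<exists>C1. trav P C i t C1) \<and> \<not> safe_step P C i t"

fun safe_path :: "('p, 't, 'r, 'x, 'c) proc_model \<Rightarrow> ('p, 'r, 'c) config \<Rightarrow> (nat \<times> 't) list
                    \<Rightarrow> ('p, 'r, 'c) config \<Rightarrow> bool" where
  "safe_path P C [] C' = (C' = C)"
| "safe_path P C ((i, t) # s) C' =
     (safe_step P C i t \<and> (\<exists>C1. trav P C i t C1 \<and> safe_path P C1 s C'))"

definition greedy_seq :: "('p, 't, 'r, 'x, 'c) proc_model \<Rightarrow> ('p, 'r, 'c) config \<Rightarrow> (nat \<times> 't) list
                    \<Rightarrow> ('p, 'r, 'c) config \<Rightarrow> bool" where
  "greedy_seq P C s C' \<longleftrightarrow> safe_path P C s C' \<and>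
     (\<forall>s' C''. safe_path P C s' C'' \<longrightarrow> card (db C'' - db C) \<le> card (db C' - db C))"

text \<open>Greedy execution: closed execution of the form G_0 c_1 G_1 ... c_k G_k with G_i greedy
  sequences and c_i critical steps.\<close>
inductive greedy_exec :: "('p, 't, 'r, 'x, 'c) proc_model \<Rightarrow> ('p, 'r, 'c) config \<Rightarrow> (nat \<times> 't) list
                    \<Rightarrow> ('p, 'r, 'c) config \<Rightarrow> bool" for P where
  greedy_last: "greedy_seq P C s C' \<Longrightarrow> greedy_exec P C s C'"
| greedy_crit: "greedy_seq P C s C1 \<Longrightarrow> critical_step P C1 i t \<Longrightarrow> trav P C1 i t C2 \<Longrightarrow>
     greedy_exec P C2 s' C' \<Longrightarrow> greedy_exec P C (s @ (i, t) # s') C'"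

end

theory Submission imports Defs begin

definition posm :: "('p, 't, 'r, 'x, 'c) proc_model \<Rightarrow> bool" where
  "posm P \<longleftrightarrow> (\<forall>t\<in>trans P. (\<forall>l\<in>set (cond P t). \<not> is_neg l) \<and> (\<forall>l\<in>set (wbody P t). \<not> is_neg l))"

lemma sat_lit_mono: "sat_lit I \<nu> l \<Longrightarrow> I \<subseteq> I' \<Longrightarrow> \<not> is_neg l \<Longrightarrow> sat_lit I' \<nu> l"
  by (cases l) auto

lemma holds_mono: "holds I q \<Longrightarrow> I \<subseteq> I' \<Longrightarrow> \<forall>l\<in>set q. \<not> is_neg l \<Longrightarrow> holds I' q"
  unfolding holds_def by (meson sat_lit_mono)

lemma answers_mono: "I \<subseteq> I' \<Longrightarrow> \<forall>l\<in>set q. \<not> is_neg l \<Longrightarrow> answers I q us \<subseteq> answers I' q us"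
  unfolding answers_def by (blast intro: sat_lit_mono)

lemma ext_db_mono: "D \<subseteq> D' \<Longrightarrow> ext_db D r \<subseteq> ext_db D' r"
  unfolding ext_db_def by auto

lemma trav_inst: "trav P C i t C1 \<Longrightarrow> \<exists>r. inst C i = Some (r, src P t) \<and> inst C1 = (inst C)(i \<mapsto> (r, tgt P t))"
  unfolding trav_def by auto

lemma trav_db: "trav P C i t C1 \<Longrightarrow> db C \<subseteq> db C1"
  unfolding trav_def by auto

lemma trav_det: "trav P C i t C1 \<Longrightarrow> trav P C i t C2 \<Longrightarrow> C1 = C2"
  unfolding trav_def by auto

lemma sim1:
  assumes "posm P" "trav P X j t X1" "inst Y j = inst X j" "db X \<subseteq> db Y"
  shows "\<exists>Y1. trav P Y j t Y1 \<and> db X1 \<subseteq> db Y1 \<and> inst Y1 = (inst Y)(j := inst X1 j)"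
proof -
  from assms(2) obtain r where t: "t \<in> trans P" and ir: "inst X j = Some (r, src P t)"
    and h: "holds (ext_db (db X) r) (cond P t)"
    and X1: "X1 = X\<lparr> inst := (inst X)(j \<mapsto> (r, tgt P t)),
                  db := db X \<union> {(wrel P t, u) | u. u \<in> answers (ext_db (db X) r) (wbody P t) (whead P t)} \<rparr>"
    unfolding trav_def by blast
  have e: "ext_db (db X) r \<subseteq> ext_db (db Y) r" using assms(4) by (rule ext_db_mono)
  have pc: "\<forall>l\<in>set (cond P t). \<not> is_neg l" and pb: "\<forall>l\<in>set (wbody P t). \<not> is_neg l"
    using assms(1) t unfolding posm_def by auto
  define Y1 where "Y1 = Y\<lparr> inst := (inst Y)(j \<mapsto> (r, tgt P t)),
                  db := db Y \<union> {(wrel P t, u) | u. u \<in> answers (ext_db (db Y) r) (wbody P t) (whead P t)} \<rparr>"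
  have "trav P Y j t Y1" unfolding trav_def Y1_def
    using t ir assms(3) holds_mono[OF h e pc] by auto
  moreover have "db X1 \<subseteq> db Y1" unfolding X1 Y1_def using assms(4) answers_mono[OF e pb] by auto
  moreover have "inst Y1 = (inst Y)(j := inst X1 j)" unfolding X1 Y1_def by simp
  ultimately show ?thesis by blast
qed

lemma tp_append: "trav_path P C (s1 @ s2) C' \<longleftrightarrow> (\<exists>C1. trav_path P C s1 C1 \<and> trav_path P C1 s2 C')"
proof (induction s1 arbitrary: C)
  case (Cons a s1) then show ?case by (cases a) auto
qed simp

lemma sp_append: "safe_path P C (s1 @ s2) C' \<longleftrightarrow> (\<exists>C1. safe_path P C s1 C1 \<and> safe_path P C1 s2 C')"
proof (induction s1 arbitrary: C)
  case (Cons a s1) then show ?case by (cases a) auto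
qed simp

lemma sp_tp: "safe_path P C s C' \<Longrightarrow> trav_path P C s C'"
proof (induction s arbitrary: C)
  case (Cons a s1) then show ?case by (cases a) auto
qed simp

lemma tp_db: "trav_path P C s C' \<Longrightarrow> db C \<subseteq> db C'"
proof (induction s arbitrary: C)
  case (Cons a s1) then show ?case by (cases a) (auto dest!: trav_db)
qed simp

lemma tp_det: "trav_path P C s C1 \<Longrightarrow> trav_path P C s C2 \<Longrightarrow> C1 = C2"
proof (induction s arbitrary: C)
  case (Cons a s1) then show ?case by (cases a) (auto dest: trav_det)
qed simp

lemma simpath:
  assumes "posm P" "trav_path P X (map (Pair j) cs) X'" "inst Y j = inst X j" "db X \<subseteq> db Y"
  shows "\<exists>Y'. trav_path P Y (map (Pair j) cs) Y' \<and> db X' \<subseteq> db Y' \<and> inst Y' = (inst Y)(j := inst X' j)"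
  using assms(2-)
proof (induction cs arbitrary: X Y)
  case Nil then show ?case by auto
next
  case (Cons c cs)
  then obtain X1 where x1: "trav P X j c X1" and p: "trav_path P X1 (map (Pair j) cs) X'" by auto
  from sim1[OF assms(1) x1 Cons.prems(2,3)] obtain Y1 where
    y1: "trav P Y j c Y1" "db X1 \<subseteq> db Y1" "inst Y1 = (inst Y)(j := inst X1 j)" by blast
  have "inst Y1 j = inst X1 j" using y1(3) by simp
  from Cons.IH[OF p this y1(2)] obtain Y' where
    "trav_path P Y1 (map (Pair j) cs) Y'" "db X' \<subseteq> db Y'" "inst Y' = (inst Y1)(j := inst X' j)" by blast
  then show ?case using y1 by (intro exI[of _ Y']) auto
qed

lemma tp_rec:
  "trav_path P X (map (Pair j) cs) X' \<Longrightarrow> inst X j = Some (r, a) \<Longrightarrow> \<exists>a'. inst X' j = Some (r, a')"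
proof (induction cs arbitrary: X a)
  case (Cons c cs)
  then obtain X1 where x1: "trav P X j c X1" and p: "trav_path P X1 (map (Pair j) cs) X'" by auto
  from trav_inst[OF x1] Cons.prems(2) have "inst X1 j = Some (r, tgt P c)" by auto
  then show ?case using Cons.IH[OF p] by blast
qed simp


lemma cycle_safe:
  assumes "posm P"
  shows "trav_path P X (map (Pair j) cs) X' \<Longrightarrow> inst X' j = inst X j \<Longrightarrow> inst Y j = inst X j
    \<Longrightarrow> db X \<subseteq> db Y \<Longrightarrow> n \<le> length cs \<Longrightarrow> \<exists>Y'. safe_path P Y (map (Pair j) (take n cs)) Y'"
proof (induction n arbitrary: X X' Y cs)
  case 0 then show ?case by auto
next
  case (Suc n)
  then obtain c cs' where cs: "cs = c # cs'" by (cases cs) auto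
  with Suc.prems obtain X1 where x1: "trav P X j c X1" and p: "trav_path P X1 (map (Pair j) cs') X'" by auto
  from sim1[OF assms x1 Suc.prems(3,4)] obtain Y1 where
    y1: "trav P Y j c Y1" "db X1 \<subseteq> db Y1" "inst Y1 = (inst Y)(j := inst X1 j)" by blast
  have y1j: "inst Y1 j = inst X1 j" using y1(3) by simp
  from simpath[OF assms p y1j y1(2)] obtain Y2 where
    y2: "trav_path P Y1 (map (Pair j) cs') Y2" "inst Y2 = (inst Y1)(j := inst X' j)" by blast
  have "map_option snd (inst Y2 j) = map_option snd (inst Y j)" using y2(2) Suc.prems by simp
  hence safe: "safe_step P Y j c" unfolding safe_step_def using y1(1) y2(1) by blast
  have dbx: "db X \<subseteq> db X'" using tp_db[OF p] trav_db[OF x1] by auto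
  from sim1[OF assms x1 _ dbx] Suc.prems(2) obtain X'' where
    x'': "trav P X' j c X''" "inst X'' = (inst X')(j := inst X1 j)" by force
  have cyc: "trav_path P X1 (map (Pair j) (cs' @ [c])) X''"
    using p x''(1) by (auto simp: tp_append)
  have "inst X'' j = inst X1 j" using x''(2) by simp
  from Suc.IH[OF cyc this y1j y1(2)] Suc.prems(5) cs obtain Y' where
    "safe_path P Y1 (map (Pair j) (take n (cs' @ [c]))) Y'" by auto
  moreover have "take n (cs' @ [c]) = take n cs'" using Suc.prems(5) cs by simp
  ultimately show ?case using safe y1(1) cs by auto
qed

lemma undo:
  assumes "posm P"
  shows "safe_path P D s D' \<Longrightarrow> \<exists>u D''. safe_path P D' u D'' \<and> inst D'' = inst D"
proof (induction s arbitrary: D)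
  case Nil then show ?case by (intro exI[of _ "[]"]) auto
next
  case (Cons a s1)
  obtain j t where a: "a = (j, t)" by (cases a)
  from Cons.prems a obtain D1 where ss: "safe_step P D j t" and d1: "trav P D j t D1"
    and sp: "safe_path P D1 s1 D'" by auto
  from Cons.IH[OF sp] obtain u D'' where u: "safe_path P D' u D''" "inst D'' = inst D1" by blast
  from ss obtain C1 ts C2 where c1: "trav P D j t C1" and c2: "trav_path P C1 (map (Pair j) ts) C2"
    and ret: "map_option snd (inst C2 j) = map_option snd (inst D j)"
    unfolding safe_step_def by blast
  have "C1 = D1" using trav_det[OF c1 d1] .
  note c2 = c2[unfolded this]
  from trav_inst[OF d1] obtain r where r: "inst D j = Some (r, src P t)"
    "inst D1 = (inst D)(j \<mapsto> (r, tgt P t))" by blast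
  have "inst D1 j = Some (r, tgt P t)" using r by simp
  from tp_rec[OF c2 this] obtain a' where "inst C2 j = Some (r, a')" by blast
  with ret r have c2j: "inst C2 j = inst D j" by simp
  have dbD: "db D \<subseteq> db C2" using trav_db[OF d1] tp_db[OF c2] by auto
  from sim1[OF assms d1 c2j dbD] obtain C3 where
    c3: "trav P C2 j t C3" "inst C3 = (inst C2)(j := inst D1 j)" by blast
  have cyc: "trav_path P D1 (map (Pair j) (ts @ [t])) C3" using c2 c3(1) by (auto simp: tp_append)
  have c3j: "inst C3 j = inst D1 j" using c3(2) by simp
  have d''j: "inst D'' j = inst D1 j" using u(2) by simp
  have dbD1: "db D1 \<subseteq> db D''" using tp_db[OF sp_tp[OF sp]] tp_db[OF sp_tp[OF u(1)]] by auto
  from cycle_safe[OF assms cyc c3j d''j dbD1, of "length ts"] obtain D3 where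
    d3: "safe_path P D'' (map (Pair j) ts) D3" by auto
  from simpath[OF assms c2 d''j dbD1] obtain Y' where
    y': "trav_path P D'' (map (Pair j) ts) Y'" "inst Y' = (inst D'')(j := inst C2 j)" by blast
  have "D3 = Y'" using tp_det[OF sp_tp[OF d3] y'(1)] .
  hence "inst D3 = inst D" using y'(2) u(2) r c2j by auto
  moreover have "safe_path P D' (u @ map (Pair j) ts) D3" using u(1) d3 by (auto simp: sp_append)
  ultimately show ?case by blast
qed


definition vals0 :: "('p, 'r, 'c) config \<Rightarrow> 'c val set" where
  "vals0 C0 = {v. \<exists>R xs. (R, xs) \<in> db C0 \<and> v \<in> set xs} \<union>
     {v. \<exists>i r q. inst C0 i = Some (r, q) \<and> (v \<in> set (fst r) \<or> v = TS (snd r))}"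

definition maxlen :: "('p, 't, 'r, 'x, 'c) proc_model \<Rightarrow> nat" where
  "maxlen P = Max (insert 0 ((\<lambda>t. length (whead P t)) ` trans P))"

definition U0 :: "('p, 't, 'r, 'x, 'c) proc_model \<Rightarrow> ('p, 'r, 'c) config \<Rightarrow> ('r, 'c) fact set" where
  "U0 P C0 = db C0 \<union> {(R, xs). R \<in> wrel P ` trans P \<and> set xs \<subseteq> vals0 C0 \<and> length xs \<le> maxlen P}"

definition Inv :: "('p, 't, 'r, 'x, 'c) proc_model \<Rightarrow> ('p, 'r, 'c) config \<Rightarrow> ('p, 'r, 'c) config \<Rightarrow> bool" where
  "Inv P C0 C \<longleftrightarrow> db C \<subseteq> U0 P C0 \<and> (\<forall>i r q. inst C i = Some (r, q) \<longrightarrow> (\<exists>q0. inst C0 i = Some (r, q0)))"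

lemma Inv0: "Inv P C0 C0" unfolding Inv_def U0_def by auto

lemma U0_vals: "(R, xs) \<in> U0 P C0 \<Longrightarrow> set xs \<subseteq> vals0 C0"
  unfolding U0_def vals0_def by auto

lemma ext_vals: "Inv P C0 C \<Longrightarrow> inst C i = Some (r, q) \<Longrightarrow> (Rn, u) \<in> ext_db (db C) r \<Longrightarrow> set u \<subseteq> vals0 C0"
proof -
  assume inv: "Inv P C0 C" and ir: "inst C i = Some (r, q)" and m: "(Rn, u) \<in> ext_db (db C) r"
  show ?thesis
  proof (cases "Rn = InRel")
    case True
    then have u: "u = fst r @ [TS (snd r)]" using m unfolding ext_db_def by auto
    from inv ir obtain q0 where "inst C0 i = Some (r, q0)" unfolding Inv_def by blast
    then show ?thesis unfolding u vals0_def by (cases r) fastforce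
  next
    case False
    then obtain R where "(R, u) \<in> db C" using m unfolding ext_db_def by auto
    then have "(R, u) \<in> U0 P C0" using inv unfolding Inv_def by auto
    then show ?thesis by (rule U0_vals)
  qed
qed

lemma answers_vals:
  assumes "range_restricted q (set us)" "\<forall>(Rn, u)\<in>I. set u \<subseteq> V" "xs \<in> answers I q us"
  shows "set xs \<subseteq> V \<and> length xs = length us"
proof -
  from assms(3) obtain \<nu> where xs: "xs = map \<nu> us" and s: "\<forall>l\<in>set q. sat_lit I \<nu> l"
    unfolding answers_def by blast
  have "\<nu> x \<in> V" if x: "x \<in> set us" for x
  proof -
    from assms(1) x obtain l where l: "l \<in> set q" "x \<in> pos_vars_lit l"
      unfolding range_restricted_def by blast
    obtain Rn ts where lp: "l = Pos Rn ts" using l(2) by (cases l) auto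
    with l obtain tm where tm: "tm \<in> set ts" "x \<in> trm_vars tm" by auto
    have "tm = Var x" using tm(2) by (cases tm) auto
    with tm have "\<nu> x \<in> set (map (eval_trm \<nu>) ts)" by force
    moreover have "(Rn, map (eval_trm \<nu>) ts) \<in> I" using s l lp by fastforce
    ultimately show ?thesis using assms(2) by blast
  qed
  then show ?thesis using xs by auto
qed

lemma Inv_trav:
  assumes "wf_model P" "Inv P C0 C" "trav P C i t C1"
  shows "Inv P C0 C1"
proof -
  from assms(3) obtain r where t: "t \<in> trans P" and ir: "inst C i = Some (r, src P t)"
    and C1: "C1 = C\<lparr> inst := (inst C)(i \<mapsto> (r, tgt P t)),
                  db := db C \<union> {(wrel P t, u) | u. u \<in> answers (ext_db (db C) r) (wbody P t) (whead P t)} \<rparr>"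
    unfolding trav_def by blast
  have rr: "range_restricted (wbody P t) (set (whead P t))" and ft: "finite (trans P)"
    using assms(1) t unfolding wf_model_def by auto
  have vI: "\<forall>(Rn, u)\<in>ext_db (db C) r. set u \<subseteq> vals0 C0"
    using ext_vals[OF assms(2) ir] by blast
  have "(wrel P t, u) \<in> U0 P C0" if "u \<in> answers (ext_db (db C) r) (wbody P t) (whead P t)" for u
  proof -
    from answers_vals[OF rr vI that] have "set u \<subseteq> vals0 C0" "length u = length (whead P t)" by auto
    moreover have "length (whead P t) \<le> maxlen P" unfolding maxlen_def
      using ft t by (intro Max_ge) auto
    ultimately show ?thesis unfolding U0_def using t by auto
  qed
  moreover have "db C \<subseteq> U0 P C0" using assms(2) unfolding Inv_def by auto
  moreover have "\<exists>q0. inst C0 i = Some (r, q0)" using assms(2) ir unfolding Inv_def by blast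
  ultimately show ?thesis using assms(2) unfolding C1 Inv_def by auto
qed

lemma Inv_tp: "wf_model P \<Longrightarrow> Inv P C0 C \<Longrightarrow> trav_path P C s C' \<Longrightarrow> Inv P C0 C'"
proof (induction s arbitrary: C)
  case (Cons a s1) then show ?case by (cases a) (auto dest: Inv_trav)
qed simp

lemma finite_U0:
  assumes "finite (db C0)" "finite (dom (inst C0))" "finite (trans P)"
  shows "finite (U0 P C0)"
proof -
  have f1: "finite {v. \<exists>R xs. (R, xs) \<in> db C0 \<and> v \<in> set xs}"
  proof (rule finite_subset)
    show "{v. \<exists>R xs. (R, xs) \<in> db C0 \<and> v \<in> set xs} \<subseteq> \<Union> ((\<lambda>f. set (snd f)) ` db C0)" by force
  qed (use assms(1) in auto)
  have f2: "finite {v. \<exists>i r q. inst C0 i = Some (r, q) \<and> (v \<in> set (fst r) \<or> v = TS (snd r))}"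
  proof (rule finite_subset)
    show "{v. \<exists>i r q. inst C0 i = Some (r, q) \<and> (v \<in> set (fst r) \<or> v = TS (snd r))}
      \<subseteq> \<Union> ((\<lambda>x. insert (TS (snd (fst x))) (set (fst (fst x)))) ` ran (inst C0))"
      by (force simp: ran_def)
  qed (use assms(2) finite_ran in auto)
  have fv: "finite (vals0 C0)" unfolding vals0_def using f1 f2 by auto
  have "{(R, xs). R \<in> wrel P ` trans P \<and> set xs \<subseteq> vals0 C0 \<and> length xs \<le> maxlen P}
     \<subseteq> (wrel P ` trans P) \<times> {xs. set xs \<subseteq> vals0 C0 \<and> length xs \<le> maxlen P}" by auto
  moreover have "finite ((wrel P ` trans P) \<times> {xs. set xs \<subseteq> vals0 C0 \<and> length xs \<le> maxlen P})"
    using assms(3) finite_lists_length_le[OF fv] by auto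
  ultimately show ?thesis unfolding U0_def using assms(1) finite_subset by auto
qed

lemma greedy_exists:
  assumes "wf_model P" "finite (U0 P C0)" "Inv P C0 C"
  shows "\<exists>s D. greedy_seq P C s D"
proof -
  define S where "S = {card (db C'' - db C) | s' C''. safe_path P C s' C''}"
  have "S \<subseteq> {..card (U0 P C0)}"
  proof
    fix k assume "k \<in> S"
    then obtain s' C'' where k: "k = card (db C'' - db C)" and sp: "safe_path P C s' C''"
      unfolding S_def by blast
    have "db C'' \<subseteq> U0 P C0" using Inv_tp[OF assms(1,3) sp_tp[OF sp]] unfolding Inv_def by auto
    then have "card (db C'' - db C) \<le> card (U0 P C0)" using assms(2)
      by (meson Diff_subset card_mono order_trans)
    then show "k \<in> {..card (U0 P C0)}" using k by auto
  qed
  then have fS: "finite S" using finite_subset by blast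
  have "card (db C - db C) \<in> S" unfolding S_def by (intro CollectI exI[of _ "[]"] exI[of _ C]) auto
  then have ne: "S \<noteq> {}" by auto
  have "Max S \<in> S" using Max_in[OF fS ne] .
  then obtain s D where sd: "Max S = card (db D - db C)" "safe_path P C s D" unfolding S_def by auto
  have "greedy_seq P C s D" unfolding greedy_seq_def
  proof (intro conjI sd(2) allI impI)
    fix s' C'' assume "safe_path P C s' C''"
    then have "card (db C'' - db C) \<in> S" unfolding S_def by blast
    then show "card (db C'' - db C) \<le> card (db D - db C)" using Max_ge[OF fS] sd(1) by metis
  qed
  then show ?thesis by blast
qed

lemma greedy_extend:
  assumes "wf_model P" "finite (U0 P C0)" "Inv P C0 C" "greedy_seq P C s D" "safe_path P D s' D'"
  shows "greedy_seq P C (s @ s') D'"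
  unfolding greedy_seq_def
proof (intro conjI allI impI)
  have sp: "safe_path P C s D" using assms(4) unfolding greedy_seq_def by auto
  then show "safe_path P C (s @ s') D'" using assms(5) by (auto simp: sp_append)
  fix s'' C'' assume "safe_path P C s'' C''"
  then have "card (db C'' - db C) \<le> card (db D - db C)" using assms(4) unfolding greedy_seq_def by auto
  also have "\<dots> \<le> card (db D' - db C)"
  proof (rule card_mono)
    have "Inv P C0 D'" using Inv_tp[OF assms(1,3) sp_tp[OF sp]] Inv_tp[OF assms(1) _ sp_tp[OF assms(5)]] by auto
    then have "db D' \<subseteq> U0 P C0" unfolding Inv_def by auto
    then show "finite (db D' - db C)" using assms(2) finite_subset by blast
    show "db D - db C \<subseteq> db D' - db C" using tp_db[OF sp_tp[OF assms(5)]] by auto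
  qed
  finally show "card (db C'' - db C) \<le> card (db D' - db C)" .
qed

lemma gexec_safe:
  assumes "wf_model P" "finite (U0 P C0)"
  shows "greedy_exec P C s D \<Longrightarrow> Inv P C0 C \<Longrightarrow> safe_path P D s' D' \<Longrightarrow> greedy_exec P C (s @ s') D'"
proof (induction rule: greedy_exec.induct)
  case (greedy_last C s C')
  then show ?case using greedy_extend[OF assms] greedy_exec.greedy_last by blast
next
  case (greedy_crit C s C1 i t C2 s'' C')
  have "Inv P C0 C1" using Inv_tp[OF assms(1) greedy_crit.prems(1)] sp_tp greedy_crit.hyps(1)
    unfolding greedy_seq_def by blast
  then have "Inv P C0 C2" using Inv_trav[OF assms(1) _ greedy_crit.hyps(3)] by blast
  then have "greedy_exec P C2 (s'' @ s') D'" using greedy_crit.IH greedy_crit.prems(2) by blast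
  then show ?case using greedy_exec.greedy_crit[OF greedy_crit.hyps(1-3)] by auto
qed

lemma gexec_crit:
  "greedy_exec P C s D \<Longrightarrow> critical_step P D i t \<Longrightarrow> trav P D i t D1 \<Longrightarrow> greedy_seq P D1 g D2
   \<Longrightarrow> greedy_exec P C (s @ (i, t) # g) D2"
proof (induction rule: greedy_exec.induct)
  case (greedy_last C s C')
  then show ?case by (blast intro: greedy_exec.intros)
next
  case (greedy_crit C s C1 i' t' C2 s'' C')
  then show ?case using greedy_exec.greedy_crit[OF greedy_crit.hyps(1-3)] by fastforce
qed


lemma main_sim:
  assumes wf: "wf_model P" and fU: "finite (U0 P C0)" and pos: "posm P"
  shows "trav_path P E s C \<Longrightarrow> greedy_exec P C0 s0 D \<Longrightarrow> inst D = inst E \<Longrightarrow> db E \<subseteq> db D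
    \<Longrightarrow> Inv P C0 D \<Longrightarrow> \<exists>s' C'. greedy_exec P C0 s' C' \<and> db C \<subseteq> db C'"
proof (induction s arbitrary: E s0 D)
  case Nil then show ?case by auto
next
  case (Cons a s)
  obtain i t where a: "a = (i, t)" by (cases a)
  from Cons.prems a obtain E1 where e1: "trav P E i t E1" and p: "trav_path P E1 s C" by auto
  have ij: "inst D i = inst E i" using Cons.prems(3) by simp
  from sim1[OF pos e1 ij Cons.prems(4)] obtain D1 where
    d1: "trav P D i t D1" "db E1 \<subseteq> db D1" "inst D1 = (inst D)(i := inst E1 i)" by blast
  have iE1: "inst D1 = inst E1" using d1(3) trav_inst[OF e1] Cons.prems(3) by auto
  have inv1: "Inv P C0 D1" using Inv_trav[OF wf Cons.prems(5) d1(1)] .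
  have inv0: "Inv P C0 C0" by (rule Inv0)
  show ?case
  proof (cases "safe_step P D i t")
    case True
    then have "safe_path P D [(i, t)] D1" using d1(1) by auto
    from gexec_safe[OF wf fU Cons.prems(2) inv0 this] have "greedy_exec P C0 (s0 @ [(i, t)]) D1" .
    from Cons.IH[OF p this iE1 d1(2) inv1] show ?thesis .
  next
    case False
    then have crit: "critical_step P D i t" unfolding critical_step_def using d1(1) by blast
    from greedy_exists[OF wf fU inv1] obtain g D2 where g: "greedy_seq P D1 g D2" by blast
    then have sg: "safe_path P D1 g D2" unfolding greedy_seq_def by auto
    from undo[OF pos sg] obtain u D3 where u: "safe_path P D2 u D3" "inst D3 = inst D1" by blast
    have g2: "greedy_seq P D1 (g @ u) D3" using greedy_extend[OF wf fU inv1 g u(1)] .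
    have ge: "greedy_exec P C0 (s0 @ (i, t) # (g @ u)) D3"
      using gexec_crit[OF Cons.prems(2) crit d1(1) g2] .
    have "db D1 \<subseteq> db D3" using tp_db[OF sp_tp[OF sg]] tp_db[OF sp_tp[OF u(1)]] by auto
    moreover have "Inv P C0 D3" using Inv_tp[OF wf inv1 sp_tp[OF sg]] Inv_tp[OF wf _ sp_tp[OF u(1)]] by blast
    ultimately show ?thesis using Cons.IH[OF p ge] u(2) iE1 d1(2) by auto
  qed
qed

theorem lemma4:
  fixes B :: "('p, 't, 'r, 'x, 'c) mdabp"
    and W :: "('r, 'c) fact set"
  assumes "wf_mdabp B"
    and "positive B"
    and "trav_path (model B) (conf B) s C"
    and "W \<subseteq> db C"
  shows "\<exists>s' C'. greedy_exec (model B) (conf B) s' C' \<and> W \<subseteq> db C'"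
proof -
  let ?P = "model B" and ?C0 = "conf B"
  have wf: "wf_model ?P" and wc: "wf_config ?P ?C0" using assms(1) unfolding wf_mdabp_def by auto
  have pos: "posm ?P" using assms(2) unfolding positive_def posm_def .
  have fU: "finite (U0 ?P ?C0)" using wf wc unfolding wf_model_def wf_config_def
    by (intro finite_U0) auto
  have inv0: "Inv ?P ?C0 ?C0" by (rule Inv0)
  from greedy_exists[OF wf fU inv0] obtain g D where g: "greedy_seq ?P ?C0 g D" by blast
  then have sg: "safe_path ?P ?C0 g D" unfolding greedy_seq_def by auto
  from undo[OF pos sg] obtain u D' where u: "safe_path ?P D u D'" "inst D' = inst ?C0" by blast
  have "greedy_seq ?P ?C0 (g @ u) D'" using greedy_extend[OF wf fU inv0 g u(1)] .
  then have ge: "greedy_exec ?P ?C0 (g @ u) D'" by (rule greedy_exec.greedy_last)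
  have "db ?C0 \<subseteq> db D'" using tp_db[OF sp_tp[OF sg]] tp_db[OF sp_tp[OF u(1)]] by auto
  moreover have "Inv ?P ?C0 D'" using Inv_tp[OF wf inv0 sp_tp[OF sg]] Inv_tp[OF wf _ sp_tp[OF u(1)]] by blast
  ultimately obtain s' C' where "greedy_exec ?P ?C0 s' C'" "db C \<subseteq> db C'"
    using main_sim[OF wf fU pos assms(3) ge] u(2) by blast
  then show ?thesis using assms(4) by blast
qed

end
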